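(* Let $m\ge3$ and $s$ be odd positive integers, $n=sm$, and $\Gamma=C_n[mK_1]$. Define $$\sigma_1=(1,1,\dots,1,tc^{-1})r,\qquad \sigma_2=(t,\alpha_2,\alpha_3,\dots,\alpha_n)z \text{ with } \alpha_i=c^{(-1)^{i-1}(2i-3)}\ (2\le i\le n),$$ i.e. $\sigma_2=(t,c^{-1},c^{3},c^{-5},\dots,c^{5},c^{-3})z$, and $G=\langle\sigma_1,\sigma_2\rangle$. Then $\sigma_1$ has order $2n$, $\sigma_2$ has order $2m$, $\sigma_1\sigma_2$ has order $2$, and $|G|=4m^2n$.
   Context: $C_n[mK_1]$ is the graph with vertex set $\{1,\dots,n\}\times\{1,\dots,m\}$ in which $(i_1,j_1)$ is adjacent to $(i_2,j_2)$ if and only if $i_1\equiv i_2\pm1\pmod n$ (residues mod $n$ taken in $\{1,\dots,n\}$). Permutations act on the right ($x\alpha$ is the image of $x$) and products are composed left to right, both in $S_m$ and in $\mathrm{Aut}(\Gamma)$. For $\alpha_1,\dots,\alpha_n\in S_m$ and a permutation $x$ of $\{1,\dots,n\}$ in the dihedral group $D_n=\langle r,z\rangle$, $(\alpha_1,\dots,\alpha_n)x$ denotes the automorphism of $\Gamma$ mapping $(i,j)\mapsto(ix,\,j\alpha_i)$; $1$ denotes an identity permutation. Here $c=(1\,2\,\cdots\,m)\in S_m$; $t\in S_m$ fixes $1$ and maps $j\mapsto m-j+2$ for $2\le j\le m$; $r$ is the permutation $i\mapsto i+1 \pmod n$ of $\{1,\dots,n\}$; and $z$ fixes $1$ and maps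 $j\mapsto n-j+2$ for $2\le j\le n$. *)

theory Defs
  imports "HOL-Algebra.Algebra"
begin

definition vset :: "nat \<Rightarrow> nat \<Rightarrow> (nat \<times> nat) set" where
  "vset n m = {1..n} \<times> {1..m}"

text \<open>c^k for integer k, where c = (1 2 ... m); acting on {1..m}.\<close>
definition cpow :: "nat \<Rightarrow> int \<Rightarrow> nat \<Rightarrow> nat" where
  "cpow m k j = nat ((int j - 1 + k) mod int m) + 1"

definition tperm :: "nat \<Rightarrow> nat \<Rightarrow> nat" where
  "tperm m j = (if j = 1 then 1 else m + 2 - j)"

definition rperm :: "nat \<Rightarrow> nat \<Rightarrow> nat" where
  "rperm n i = (i mod n) + 1"

definition zperm :: "nat \<Rightarrow> nat \<Rightarrow> nat" where
  "zperm n i = (if i = 1 then 1 else n + 2 - i)"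

text \<open>sigma_1 = (1,...,1,t c^{-1}) r; right actions composed left to right,
  so j (t c^{-1}) = cpow m (-1) (tperm m j).  Given as the
  restriction to the vertex set (element of BijGroup).\<close>
definition sigma1 :: "nat \<Rightarrow> nat \<Rightarrow> (nat \<times> nat) \<Rightarrow> (nat \<times> nat)" where
  "sigma1 n m = (\<lambda>(i, j) \<in> vset n m.
     (rperm n i, if i = n then cpow m (-1) (tperm m j) else j))"

definition sigma2 :: "nat \<Rightarrow> nat \<Rightarrow> (nat \<times> nat) \<Rightarrow> (nat \<times> nat)" where
  "sigma2 n m = (\<lambda>(i, j) \<in> vset n m.
     (zperm n i, if i = 1 then tperm m j
                 else cpow m ((-1) ^ (i - 1) * (2 * int i - 3)) j))"

end

theory Submission
  imports Defs
begin


definition sg :: "bool \<Rightarrow> int" where "sg e = (if e then -1 else 1)"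

lemma sg_sq[simp]: "sg e * sg e = 1" by (simp add: sg_def)
lemma sg_xor: "sg (e \<noteq> e') = sg e * sg e'" by (simp add: sg_def)
lemma sg_simps[simp]: "sg True = -1" "sg False = 1" by (simp_all add: sg_def)

type_synonym par = "bool \<times> int \<times> bool \<times> int \<times> int"

fun aff :: "nat \<Rightarrow> nat \<Rightarrow> par \<Rightarrow> int \<times> int \<Rightarrow> int \<times> int" where
  "aff n m (e,u,d,b,g) (x,y) = ((sg e * x + u) mod int n, (sg d * y + b * x + g) mod int m)"

fun cmp :: "par \<Rightarrow> par \<Rightarrow> par" where
  "cmp (e',u',d',b',g') (e,u,d,b,g) =
     (e \<noteq> e', sg e' * u + u', d \<noteq> d', sg d' * b + b' * sg e, sg d' * g + b' * u + g')"

locale setting =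
  fixes n m :: nat
  assumes oddm: "odd m" and m3: "3 \<le> m" and oddn: "odd n" and mn: "m dvd n" and n3: "3 \<le> n"
begin

definition hh :: int where "hh = (int m + 1) div 2"
lemma hh2: "2 * hh = int m + 1" using oddm unfolding hh_def
  by (metis add.commute dvd_mult_div_cancel even_plus_one_iff even_of_nat_iff odd_add)

definition Zset :: "(int \<times> int) set" where "Zset = {0..<int n} \<times> {0..<int m}"

fun Phi :: "nat \<times> nat \<Rightarrow> int \<times> int" where
  "Phi (i,j) = (int i - 1, ((-1)^(i-1) * (int j - 1 + hh)) mod int m)"

fun Psi :: "int \<times> int \<Rightarrow> nat \<times> nat" where
  "Psi (x,y) = (nat x + 1, nat (((-1)^(nat x) * y - hh) mod int m) + 1)"

definition Am :: "par \<Rightarrow> nat \<times> nat \<Rightarrow> nat \<times> nat" where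
  "Am p = (\<lambda>v\<in>vset n m. Psi (aff n m p (Phi v)))"

lemma mpos: "0 < m" using m3 by simp
lemma npos: "0 < n" using n3 by simp

lemma Phi_in: "v \<in> vset n m \<Longrightarrow> Phi v \<in> Zset"
  using mpos by (cases v) (auto simp: vset_def Zset_def)

lemma Psi_in: "w \<in> Zset \<Longrightarrow> Psi w \<in> vset n m"
proof (cases w)
  case (Pair x y)
  assume "w \<in> Zset"
  then show ?thesis using Pair mpos
  proof -
    have "nat (((-1)^(nat x) * y - hh) mod int m) < m"
      using mpos by (simp add: nat_less_iff)
    then show ?thesis using \<open>w \<in> Zset\<close> Pair by (auto simp: vset_def Zset_def)
  qed
qed

lemma negpow_sq: "((-1::int)^k) * (-1)^k = 1"
  by (metis power_mult_distrib mult_minus1 power_one minus_mult_minus mult_1)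

lemma Psi_Phi: "v \<in> vset n m \<Longrightarrow> Psi (Phi v) = v"
proof (cases v)
  case (Pair i j)
  assume "v \<in> vset n m"
  then have i: "1 \<le> i" "i \<le> n" and j: "1 \<le> j" "j \<le> m" using Pair by (auto simp: vset_def)
  have "nat (int i - 1) = i - 1" using i by simp
  moreover have "((-1)^(i-1) * (((-1)^(i-1) * (int j - 1 + hh)) mod int m) - hh) mod int m
      = int j - 1"
  proof -
    have "((-1)^(i-1) * (((-1)^(i-1) * (int j - 1 + hh)) mod int m) - hh) mod int m
        = ((-1)^(i-1) * ((-1)^(i-1) * (int j - 1 + hh)) - hh) mod int m"
      by (metis mod_diff_left_eq mod_mult_right_eq)
    also have "\<dots> = (int j - 1) mod int m"
      by (metis (no_types, lifting) add_diff_cancel_right' mult.assoc mult_1 negpow_sq)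
    also have "\<dots> = int j - 1" using j by simp
    finally show ?thesis .
  qed
  ultimately show ?thesis using Pair i j by simp
qed

lemma Phi_Psi: "w \<in> Zset \<Longrightarrow> Phi (Psi w) = w"
proof (cases w)
  case (Pair x y)
  assume "w \<in> Zset"
  then have x: "0 \<le> x" "x < int n" and y: "0 \<le> y" "y < int m" using Pair by (auto simp: Zset_def)
  have "((-1)^(nat x) * (int (nat (((-1)^(nat x) * y - hh) mod int m)) + hh)) mod int m = y"
  proof -
    have "((-1)^(nat x) * (int (nat (((-1)^(nat x) * y - hh) mod int m)) + hh)) mod int m
       = ((-1)^(nat x) * ((((-1)^(nat x) * y - hh) mod int m) + hh)) mod int m"
      using mpos by simp
    also have "\<dots> = ((-1)^(nat x) * (((-1)^(nat x) * y - hh) + hh)) mod int m"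
      by (metis mod_add_left_eq mod_mult_right_eq)
    also have "\<dots> = y mod int m"
      by (metis (no_types, lifting) diff_add_cancel mult.assoc mult_1 negpow_sq)
    also have "\<dots> = y" using y by simp
    finally show ?thesis .
  qed
  then show ?thesis using Pair x by simp
qed

end


lemma modn_in_modm:
  fixes n m :: int
  assumes "m dvd n"
  shows "(a * (t mod n) + c) mod m = (a * t + c) mod m"
proof -
  have "(a * (t mod n) + c) mod m = (a * ((t mod n) mod m) + c) mod m"
    by (metis mod_add_left_eq mod_mult_right_eq)
  also have "\<dots> = (a * (t mod m) + c) mod m" using assms by (simp add: mod_mod_cancel)
  also have "\<dots> = (a * t + c) mod m" by (metis mod_add_left_eq mod_mult_right_eq)
  finally show ?thesis .
qed

context setting begin

lemma mn_int: "int m dvd int n" using mn by simp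

lemma aff_in: "aff n m p w \<in> Zset"
  using mpos npos by (cases p; cases w) (auto simp: Zset_def)

lemma aff_cmp: "aff n m q (aff n m p w) = aff n m (cmp q p) w"
proof -
  obtain e u d b g where p: "p = (e,u,d,b,g)" by (cases p) auto
  obtain e' u' d' b' g' where q: "q = (e',u',d',b',g')" by (cases q) auto
  obtain x y where w: "w = (x,y)" by (cases w) auto
  have 1: "(sg e' * ((sg e*x+u) mod int n) + u') mod int n = (sg (e\<noteq>e') * x + (sg e' * u + u')) mod int n"
  proof -
    have "(sg e' * ((sg e*x+u) mod int n) + u') mod int n = (sg e' * (sg e*x+u) + u') mod int n"
      by (metis mod_add_left_eq mod_mult_right_eq)
    then show ?thesis by (cases e; cases e') (simp_all add: algebra_simps)
  qed
  have 2: "(sg d' * ((sg d*y + b*x + g) mod int m) + b' * ((sg e*x+u) mod int n) + g') mod int m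
     = (sg (d\<noteq>d') * y + (sg d' * b + b' * sg e) * x + (sg d' * g + b' * u + g')) mod int m"
  proof -
    have "(sg d' * ((sg d*y + b*x + g) mod int m) + b' * ((sg e*x+u) mod int n) + g') mod int m
       = (b' * ((sg e*x+u) mod int n) + (sg d' * ((sg d*y + b*x + g) mod int m) + g')) mod int m"
      by (simp add: algebra_simps)
    also have "\<dots> = (b' * (sg e*x+u) + (sg d' * ((sg d*y + b*x + g) mod int m) + g')) mod int m"
      by (rule modn_in_modm[OF mn_int])
    also have "\<dots> = (sg d' * ((sg d*y + b*x + g) mod int m) + (b' * (sg e*x+u) + g')) mod int m"
      by (simp add: algebra_simps)
    also have "\<dots> = (sg d' * ((sg d*y + b*x + g)) + (b' * (sg e*x+u) + g')) mod int m"
      by (metis mod_add_left_eq mod_mult_right_eq)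
    finally show ?thesis by (cases e; cases d; cases d') (simp_all add: algebra_simps)
  qed
  show ?thesis using 1 2 p q w by simp
qed

lemma aff_cong:
  assumes "(u - u') mod int n = 0" "(b - b') mod int m = 0" "(g - g') mod int m = 0"
  shows "aff n m (e,u,d,b,g) w = aff n m (e,u',d,b',g') w"
proof -
  obtain x y where w: "w = (x,y)" by (cases w) auto
  have "(sg e * x + u) mod int n = (sg e * x + u') mod int n"
    using assms(1) by (simp add: mod_eq_dvd_iff dvd_eq_mod_eq_0)
  moreover have "(sg d * y + b * x + g) mod int m = (sg d * y + b' * x + g') mod int m"
  proof -
    have "int m dvd (b - b') * x + (g - g')" using assms(2,3)
      by (simp add: mod_eq_0_iff_dvd)
    then show ?thesis by (simp add: mod_eq_dvd_iff algebra_simps)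
  qed
  ultimately show ?thesis using w by simp
qed

lemma aff_id: "w \<in> Zset \<Longrightarrow> aff n m (False,0,False,0,0) w = w"
  by (cases w) (auto simp: Zset_def)

lemma Am_in: "v \<in> vset n m \<Longrightarrow> Am p v \<in> vset n m"
  by (simp add: Am_def Psi_in aff_in)

lemma Am_Am: "v \<in> vset n m \<Longrightarrow> Am q (Am p v) = Am (cmp q p) v"
  using Am_in[of v p] by (simp add: Am_def Phi_Psi aff_in aff_cmp)

lemma Am_cong:
  assumes "(u - u') mod int n = 0" "(b - b') mod int m = 0" "(g - g') mod int m = 0"
  shows "Am (e,u,d,b,g) = Am (e,u',d,b',g')"
  unfolding Am_def using aff_cong[OF assms] by simp

lemma Am_id: "Am (False,0,False,0,0) = (\<lambda>v\<in>vset n m. v)"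
  unfolding Am_def by (rule restrict_ext) (simp add: aff_id Phi_in Psi_Phi)

fun invp :: "par \<Rightarrow> par" where
  "invp (e,u,d,b,g) = (e, - sg e * u, d, - sg d * sg e * b, - sg d * g + sg d * sg e * b * u)"

lemma cmp_invp1: "cmp (invp p) p = (False,0,False,0,0)"
  by (cases p) (auto simp: sg_def)
lemma cmp_invp2: "cmp p (invp p) = (False,0,False,0,0)"
  by (cases p) (auto simp: sg_def)

lemma Am_Bij: "Am p \<in> Bij (vset n m)"
proof -
  have "bij_betw (Am p) (vset n m) (vset n m)"
  proof (rule bij_betw_byWitness[where f'="Am (invp p)"])
    show "\<forall>a\<in>vset n m. Am (invp p) (Am p a) = a" by (simp add: Am_Am cmp_invp1 Am_id)
    show "\<forall>a\<in>vset n m. Am p (Am (invp p) a) = a" by (simp add: Am_Am cmp_invp2 Am_id)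
    show "Am p ` vset n m \<subseteq> vset n m" using Am_in by blast
    show "Am (invp p) ` vset n m \<subseteq> vset n m" using Am_in by blast
  qed
  then show ?thesis by (simp add: Bij_def Am_def)
qed

abbreviation "BG \<equiv> BijGroup (vset n m)"

lemma Am_carrier: "Am p \<in> carrier BG" by (simp add: BijGroup_def Am_Bij)

lemma Am_mult: "Am q \<otimes>\<^bsub>BG\<^esub> Am p = Am (cmp q p)"
proof -
  have "Am q \<otimes>\<^bsub>BG\<^esub> Am p = compose (vset n m) (Am q) (Am p)"
    by (simp add: BijGroup_def Am_Bij)
  also have "\<dots> = Am (cmp q p)"
  proof
    fix x show "compose (vset n m) (Am q) (Am p) x = Am (cmp q p) x"
      by (cases "x \<in> vset n m") (simp_all add: compose_def Am_Am, simp add: Am_def)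
  qed
  finally show ?thesis .
qed

lemma Am_one: "\<one>\<^bsub>BG\<^esub> = Am (False,0,False,0,0)"
  by (simp add: BijGroup_def Am_id)

end


lemma modflat: "(a * (z mod (M::int)) - c) mod M = (a*z - c) mod M"
  by (metis mod_diff_left_eq mod_mult_right_eq)

lemma modflat2: "(a * ((- (z mod (M::int)) - c + 1) mod M) - h) mod M = (a * (- z - c + 1) - h) mod M"
  by (metis modflat mod_add_left_eq mod_diff_left_eq mod_minus_eq)

context setting begin

lemma sigma1_Am: "sigma1 n m = Am (False,1,True,0,0)"
proof
  fix v show "sigma1 n m v = Am (False,1,True,0,0) v"
  proof (cases "v \<in> vset n m")
    case False then show ?thesis by (cases v) (simp add: sigma1_def Am_def)
  next
    case True
    then obtain i j where v: "v = (i,j)" and i: "1 \<le> i" "i \<le> n" and j: "1 \<le> j" "j \<le> m"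
      by (cases v) (auto simp: vset_def)
    show ?thesis
    proof (cases "i = n")
      case False
      then have "i < n" using i by simp
      obtain k where k: "i = Suc k" using i by (cases i) auto
      have e: "((-1)^i * ((-((-1)^(i-Suc 0)*(int j - 1 + hh))) mod int m) - hh) mod int m = int j - 1"
      proof -
        have "((-1)^i * ((-((-1)^(i-Suc 0)*(int j - 1 + hh))) mod int m) - hh) mod int m
           = ((-1)^i * ((-((-1)^(i-Suc 0)*(int j - 1 + hh)))) - hh) mod int m" by (rule modflat)
        also have "\<dots> = (int j - 1) mod int m" using k by (cases "even k") simp_all
        also have "\<dots> = int j - 1" using j by simp
        finally show ?thesis .
      qed
      show ?thesis using v True i j \<open>i < n\<close> e
        by (simp add: sigma1_def Am_def rperm_def mod_simps)
    next
      case True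
      have ev: "even (n - Suc 0)" using oddn n3 by simp
      have p: "(-1::int)^(n - Suc 0) = 1" using ev by (simp add: neg_one_even_power)
      have r: "(- (int j - 1 + hh) - hh) mod int m = (- int j) mod int m"
      proof -
        have "- (int j - 1 + hh) - hh = - int j - int m" using hh2 by simp
        then show ?thesis by (simp add: mod_eq_dvd_iff)
      qed
      have c: "Defs.cpow m (- 1) (tperm m j) = nat ((- int j) mod int m) + 1"
      proof (cases "j = 1")
        case True then show ?thesis by (simp add: cpow_def tperm_def)
      next
        case False
        then have "int (m + 2 - j) - 1 + - 1 = int m - int j" using j by simp
        moreover have "(int m - int j) mod int m = (- int j) mod int m" by (simp add: mod_eq_dvd_iff)
        ultimately show ?thesis using False by (simp add: cpow_def tperm_def)
      qed
      show ?thesis using v \<open>v \<in> vset n m\<close> i j True p r c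
        by (simp add: sigma1_def Am_def rperm_def mod_simps)
    qed
  qed
qed

lemma sigma2_Am: "sigma2 n m = Am (True,0,True,-2,1)"
proof
  fix v show "sigma2 n m v = Am (True,0,True,-2,1) v"
  proof (cases "v \<in> vset n m")
    case False then show ?thesis by (cases v) (simp add: sigma2_def Am_def)
  next
    case True
    then obtain i j where v: "v = (i,j)" and i: "1 \<le> i" "i \<le> n" and j: "1 \<le> j" "j \<le> m"
      by (cases v) (auto simp: vset_def)
    show ?thesis
    proof (cases "i = 1")
      case False
      obtain k where k: "i = Suc k" "1 \<le> k" using i False by (cases i) auto
      have x1: "(1 - int i) mod int n = int n + 1 - int i"
      proof -
        have "(1 - int i) mod int n = (int n + 1 - int i) mod int n" by (simp add: mod_eq_dvd_iff)
        also have "\<dots> = int n + 1 - int i" using i False by (intro mod_pos_pos_trivial) auto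
        finally show ?thesis .
      qed
      have x2: "nat (int n + 1 - int i) = n - k" using k i by simp
      have par: "even (n - k) \<longleftrightarrow> odd k" using oddn k i by (simp add: even_diff_nat)
      have e: "((-1)^(n-k) * ((- ((-1)^k * (int j - 1 + hh) mod int m) - 2 * int k + 1) mod int m) - hh) mod int m
          = (int j - 1 + (-1)^k * (2 * int k - 1)) mod int m"
      proof -
        have "((-1)^(n-k) * ((- ((-1)^k * (int j - 1 + hh) mod int m) - 2 * int k + 1) mod int m) - hh) mod int m
          = ((-1)^(n-k) * (- ((-1)^k * (int j - 1 + hh)) - 2 * int k + 1) - hh) mod int m"
          by (rule modflat2)
        also have "\<dots> = (int j - 1 + (-1)^k * (2 * int k - 1)) mod int m"
        proof (cases "even k")
          case True
          then have "(-1::int)^(n-k) = -1" "(-1::int)^k = 1" using par by simp_all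
          then show ?thesis by (simp add: algebra_simps)
        next
          case False
          then have "(-1::int)^(n-k) = 1" "(-1::int)^k = -1" using par by simp_all
          then show ?thesis by (simp add: algebra_simps)
        qed
        finally show ?thesis .
      qed
      have kn: "Suc n - k = Suc (n - k)" using k i by simp
      show ?thesis using v True i j False x1 x2 e k kn
        by (simp add: sigma2_def Am_def zperm_def cpow_def)
    next
      case True
      have r: "((1 - (int j - 1 + hh) mod int m) mod int m - hh) mod int m = (1 - int j) mod int m"
      proof -
        have "((1 - (int j - 1 + hh) mod int m) mod int m - hh) mod int m = (1 - (int j - 1 + hh) - hh) mod int m"
          by (metis mod_diff_left_eq mod_diff_right_eq)
        also have "1 - (int j - 1 + hh) - hh = 1 - int j - int m" using hh2 by simp
        finally show ?thesis by (simp add: mod_eq_dvd_iff)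
      qed
      have t: "tperm m j = nat ((1 - int j) mod int m) + 1"
      proof (cases "j = 1")
        case True then show ?thesis by (simp add: tperm_def)
      next
        case False
        have "(1 - int j) mod int m = (int m + 1 - int j) mod int m" by (simp add: mod_eq_dvd_iff)
        also have "\<dots> = int m + 1 - int j" using j False by (intro mod_pos_pos_trivial) auto
        finally show ?thesis using False j by (simp add: tperm_def)
      qed
      show ?thesis using v \<open>v \<in> vset n m\<close> i j True r t
        by (simp add: sigma2_def Am_def zperm_def)
    qed
  qed
qed

end


lemma small_eq: "0 \<le> (a::int) \<Longrightarrow> a < M \<Longrightarrow> 0 \<le> b \<Longrightarrow> b < M \<Longrightarrow> (a - b) mod M = 0 \<Longrightarrow> a = b"
proof -
  assume h: "0 \<le> a" "a < M" "0 \<le> b" "b < M" "(a - b) mod M = 0"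
  then have "M dvd a - b" by (simp only: dvd_eq_mod_eq_0)
  then have "a mod M = b mod M" by (simp only: mod_eq_dvd_iff)
  moreover have "a mod M = a" "b mod M = b" using h by (simp_all add: mod_pos_pos_trivial)
  ultimately show "a = b" by simp
qed

lemma not_dvd2: "3 \<le> M \<Longrightarrow> \<not> int M dvd 2"
proof
  assume "3 \<le> M" "int M dvd 2"
  then have "int M \<le> 2" by (intro zdvd_imp_le) simp_all
  then show False using \<open>3 \<le> M\<close> by simp
qed

lemma sg_dvd: "3 \<le> M \<Longrightarrow> int M dvd sg d - sg d' \<Longrightarrow> d = d'"
  using not_dvd2[of M] by (cases d; cases d') simp_all

context setting begin

lemma Am_Psi: "w \<in> Zset \<Longrightarrow> Am p (Psi w) = Psi (aff n m p w)"
  by (simp add: Am_def Psi_in Phi_Psi)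

lemma Psi_inj: "w \<in> Zset \<Longrightarrow> w' \<in> Zset \<Longrightarrow> Psi w = Psi w' \<Longrightarrow> w = w'"
  using Phi_Psi by metis

lemma Am_eq_aff: "Am p = Am q \<Longrightarrow> w \<in> Zset \<Longrightarrow> aff n m p w = aff n m q w"
proof -
  assume "Am p = Am q" "w \<in> Zset"
  then have "Psi (aff n m p w) = Psi (aff n m q w)" using Am_Psi by metis
  then show ?thesis using Psi_inj aff_in by blast
qed

lemma Am_eq_iff: "Am (e,u,d,b,g) = Am (e',u',d',b',g') \<longleftrightarrow>
   e = e' \<and> d = d' \<and> (u - u') mod int n = 0 \<and> (b - b') mod int m = 0 \<and> (g - g') mod int m = 0"
proof
  assume H: "Am (e,u,d,b,g) = Am (e',u',d',b',g')"
  have z: "(0,0) \<in> Zset" "(0,1) \<in> Zset" "(1,0) \<in> Zset" using m3 n3 by (auto simp: Zset_def)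
  have a1: "u mod int n = u' mod int n" "g mod int m = g' mod int m"
    using Am_eq_aff[OF H z(1)] by simp_all
  have a2: "(sg d + g) mod int m = (sg d' + g') mod int m"
    using Am_eq_aff[OF H z(2)] by simp
  have a3: "(sg e + u) mod int n = (sg e' + u') mod int n" "(b + g) mod int m = (b' + g') mod int m"
    using Am_eq_aff[OF H z(3)] by simp_all
  have g: "int m dvd g - g'" using a1 by (simp add: mod_eq_dvd_iff)
  have u: "int n dvd u - u'" using a1 by (simp add: mod_eq_dvd_iff)
  have "int m dvd (sg d + g) - (sg d' + g')" using a2 by (simp add: mod_eq_dvd_iff)
  then have "int m dvd ((sg d + g) - (sg d' + g')) - (g - g')" using g by (rule dvd_diff)
  then have "int m dvd sg d - sg d'" by simp
  then have dd: "d = d'" using m3 by (intro sg_dvd) 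
  have "int n dvd (sg e + u) - (sg e' + u')" using a3 by (simp add: mod_eq_dvd_iff)
  then have "int n dvd ((sg e + u) - (sg e' + u')) - (u - u')" using u by (rule dvd_diff)
  then have "int n dvd sg e - sg e'" by simp
  then have ee: "e = e'" using n3 by (intro sg_dvd)
  have "int m dvd (b + g) - (b' + g')" using a3 by (simp add: mod_eq_dvd_iff)
  then have "int m dvd ((b + g) - (b' + g')) - (g - g')" using g by (rule dvd_diff)
  then have "int m dvd b - b'" by simp
  then show "e = e' \<and> d = d' \<and> (u - u') mod int n = 0 \<and> (b - b') mod int m = 0 \<and> (g - g') mod int m = 0"
    using dd ee u g by (simp add: dvd_eq_mod_eq_0)
next
  assume A: "e = e' \<and> d = d' \<and> (u - u') mod int n = 0 \<and> (b - b') mod int m = 0 \<and> (g - g') mod int m = 0"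
  then have "Am (e,u,d,b,g) = Am (e,u',d,b',g')" by (intro Am_cong) auto
  then show "Am (e,u,d,b,g) = Am (e',u',d',b',g')" using A by simp
qed

lemma grp: "group BG" by (rule group_BijGroup)

lemma pow1: "Am (False,1,True,0,0) [^]\<^bsub>BG\<^esub> k = Am (False, int k, odd k, 0, 0)"
  by (induction k) (simp_all add: Am_one Am_mult)

lemma pow2: "Am (True,0,True,-2,1) [^]\<^bsub>BG\<^esub> k =
   Am (odd k, 0, odd k, if odd k then -2 * int k else 2 * int k, if odd k then 1 else 0)"
  by (induction k) (auto simp add: Am_one Am_mult algebra_simps)

lemma powA: "Am (False,u,False,0,c) [^]\<^bsub>BG\<^esub> k = Am (False, u * int k, False, 0, c * int k)"
  by (induction k) (simp_all add: Am_one Am_mult algebra_simps)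

lemma powB: "Am (False,0,False,b,0) [^]\<^bsub>BG\<^esub> k = Am (False, 0, False, b * int k, 0)"
  by (induction k) (simp_all add: Am_one Am_mult algebra_simps)

lemma ord1: "group.ord BG (sigma1 n m) = 2 * n"
proof -
  have "\<forall>k. sigma1 n m [^]\<^bsub>BG\<^esub> k = \<one>\<^bsub>BG\<^esub> \<longleftrightarrow> 2 * n dvd k"
  proof
    fix k
    have "sigma1 n m [^]\<^bsub>BG\<^esub> k = \<one>\<^bsub>BG\<^esub> \<longleftrightarrow> even k \<and> n dvd k"
      by (simp add: sigma1_Am pow1 Am_one Am_eq_iff flip: dvd_eq_mod_eq_0)
    also have "\<dots> \<longleftrightarrow> 2 * n dvd k"
    proof
      assume "even k \<and> n dvd k"
      then obtain t where t: "k = n * t" by (auto elim: dvdE)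
      then have "even t" using oddn \<open>even k \<and> n dvd k\<close> by simp
      then show "2 * n dvd k" using t by auto
    qed (auto intro: dvd_mult_left)
    finally show "sigma1 n m [^]\<^bsub>BG\<^esub> k = \<one>\<^bsub>BG\<^esub> \<longleftrightarrow> 2 * n dvd k" .
  qed
  then show ?thesis using group.ord_unique[OF grp] sigma1_Am Am_carrier by metis
qed

lemma ord2: "group.ord BG (sigma2 n m) = 2 * m"
proof -
  have "\<forall>k. sigma2 n m [^]\<^bsub>BG\<^esub> k = \<one>\<^bsub>BG\<^esub> \<longleftrightarrow> 2 * m dvd k"
  proof
    fix k
    have "sigma2 n m [^]\<^bsub>BG\<^esub> k = \<one>\<^bsub>BG\<^esub> \<longleftrightarrow> even k \<and> int m dvd 2 * int k"
      by (auto simp add: sigma2_Am pow2 Am_one Am_eq_iff simp flip: dvd_eq_mod_eq_0)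
    also have "\<dots> \<longleftrightarrow> 2 * m dvd k"
    proof
      assume A: "even k \<and> int m dvd 2 * int k"
      then have "int m dvd int (2 * k)" by simp
      then have "m dvd 2 * k" by (simp only: int_dvd_int_iff)
      moreover have "coprime m 2" using oddm by simp
      ultimately have "m dvd k" using coprime_dvd_mult_right_iff by blast
      then obtain t where t: "k = m * t" by (auto elim: dvdE)
      then have "even t" using oddm A by simp
      then show "2 * m dvd k" using t by auto
    next
      assume "2 * m dvd k"
      then obtain t where t: "k = 2 * m * t" by (auto elim: dvdE)
      then have "2 * int k = int m * (4 * int t)" by simp
      then show "even k \<and> int m dvd 2 * int k" using t by (metis dvd_triv_left even_mult_iff)
    qed
    finally show "sigma2 n m [^]\<^bsub>BG\<^esub> k = \<one>\<^bsub>BG\<^esub> \<longleftrightarrow> 2 * m dvd k" .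
  qed
  then show ?thesis using group.ord_unique[OF grp] sigma2_Am Am_carrier by metis
qed

end

context setting begin

lemma ord3: "group.ord BG (sigma2 n m \<otimes>\<^bsub>BG\<^esub> sigma1 n m) = 2"
proof -
  have x: "sigma2 n m \<otimes>\<^bsub>BG\<^esub> sigma1 n m = Am (True,-1,False,-2,-1)"
    by (simp add: sigma1_Am sigma2_Am Am_mult)
  have c: "Am (True,-1,False,-2,-1) \<in> carrier BG" by (rule Am_carrier)
  have "Am (True,-1,False,-2,-1) [^]\<^bsub>BG\<^esub> (2::nat)
      = (\<one>\<^bsub>BG\<^esub> \<otimes>\<^bsub>BG\<^esub> Am (True,-1,False,-2,-1)) \<otimes>\<^bsub>BG\<^esub> Am (True,-1,False,-2,-1)"
    by (simp only: numeral_2_eq_2 nat_pow_Suc nat_pow_0)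
  also have "\<dots> = \<one>\<^bsub>BG\<^esub>" by (simp only: Am_one Am_mult) simp
  finally have sq: "Am (True,-1,False,-2,-1) [^]\<^bsub>BG\<^esub> (2::nat) = \<one>\<^bsub>BG\<^esub>" .
  have ne: "Am (True,-1,False,-2,-1) \<noteq> \<one>\<^bsub>BG\<^esub>" by (simp add: Am_one Am_eq_iff)
  have "group.ord BG (Am (True,-1,False,-2,-1)) dvd 2"
    using group.pow_eq_id[OF grp c] sq by simp
  moreover have "group.ord BG (Am (True,-1,False,-2,-1)) \<noteq> 1"
    using group.ord_eq_1[OF grp c] ne by simp
  moreover have "\<And>d::nat. d dvd 2 \<Longrightarrow> d \<noteq> 1 \<Longrightarrow> d = 2"
  proof -
    fix d :: nat assume "d dvd 2" "d \<noteq> 1"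
    then have "d \<le> 2" using dvd_imp_le[of d 2] by simp
    have "d \<noteq> 0" proof assume "d = 0" then show False using \<open>d dvd 2\<close> by simp qed
    then show "d = 2" using \<open>d \<noteq> 1\<close> \<open>d \<le> 2\<close> by linarith
  qed
  ultimately have "group.ord BG (Am (True,-1,False,-2,-1)) = 2" by blast
  then show ?thesis using x by simp
qed

lemma subgrp: "subgroup (range Am) BG"
proof (rule group.subgroupI[OF grp])
  show "range Am \<subseteq> carrier BG" using Am_carrier by blast
  show "range Am \<noteq> {}" by blast
  fix a b assume a: "a \<in> range Am" and b: "b \<in> range Am"
  then obtain p where p: "a = Am p" by blast
  have "Am (invp p) \<otimes>\<^bsub>BG\<^esub> Am p = \<one>\<^bsub>BG\<^esub>" by (simp add: Am_mult cmp_invp1 Am_one)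
  then have "inv\<^bsub>BG\<^esub> a = Am (invp p)" using group.inv_equality[OF grp] p Am_carrier by blast
  then show "inv\<^bsub>BG\<^esub> a \<in> range Am" by simp
  from b obtain q where q: "b = Am q" by blast
  show "a \<otimes>\<^bsub>BG\<^esub> b \<in> range Am" using p q by (simp add: Am_mult)
qed

definition Gen where "Gen = generate BG {sigma1 n m, sigma2 n m}"

lemma gen_sub: "subgroup Gen BG"
  unfolding Gen_def
  by (rule group.generate_is_subgroup[OF grp]) (simp add: sigma1_Am sigma2_Am Am_carrier)

lemma gen_le: "Gen \<subseteq> range Am"
  unfolding Gen_def
  by (rule group.generate_subgroup_incl[OF grp _ subgrp]) (auto simp: sigma1_Am sigma2_Am)

lemma s1_in: "Am (False,1,True,0,0) \<in> Gen"
proof -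
  have "sigma1 n m \<in> Gen" unfolding Gen_def by (rule generate.incl) simp
  then show ?thesis by (simp only: sigma1_Am)
qed
lemma s2_in: "Am (True,0,True,-2,1) \<in> Gen"
proof -
  have "sigma2 n m \<in> Gen" unfolding Gen_def by (rule generate.incl) simp
  then show ?thesis by (simp only: sigma2_Am)
qed

lemma gmult: "x \<in> Gen \<Longrightarrow> y \<in> Gen \<Longrightarrow> x \<otimes>\<^bsub>BG\<^esub> y \<in> Gen"
  by (rule subgroup.m_closed[OF gen_sub])

lemma gpow: "x \<in> Gen \<Longrightarrow> x [^]\<^bsub>BG\<^esub> (k::nat) \<in> Gen"
proof (induction k)
  case 0 then show ?case using subgroup.one_closed[OF gen_sub] by simp
next
  case (Suc k) then show ?case using gmult by simp
qed

lemma gAm: "Am p \<in> Gen \<Longrightarrow> Am q \<in> Gen \<Longrightarrow> Am (cmp p q) \<in> Gen"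
proof -
  assume "Am p \<in> Gen" "Am q \<in> Gen"
  then have "Am p \<otimes>\<^bsub>BG\<^esub> Am q \<in> Gen" by (rule gmult)
  then show ?thesis by (simp only: Am_mult)
qed

lemma N_in: "Am (False,0,True,0,0) \<in> Gen"
proof -
  have "Am (False,1,True,0,0) [^]\<^bsub>BG\<^esub> n \<in> Gen" by (rule gpow[OF s1_in])
  moreover have "Am (False,1,True,0,0) [^]\<^bsub>BG\<^esub> n = Am (False,0,True,0,0)"
    using oddn by (simp add: pow1 Am_eq_iff)
  ultimately show ?thesis by simp
qed

lemma R_in: "Am (False,1,False,0,0) \<in> Gen"
  using gAm[OF s1_in N_in] by simp

lemma Z_in: "Am (True,0,False,-2,1) \<in> Gen"
  using gAm[OF s2_in N_in] by simp

lemma h0: "hh \<ge> 0" using hh2 by linarith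

lemma Y_in: "Am (False,0,False,0,1) \<in> Gen"
proof -
  have "Am (False,0,False,0,2) \<in> Gen" using gAm[OF Z_in Z_in] by simp
  then have "Am (False,0,False,0,2) [^]\<^bsub>BG\<^esub> nat hh \<in> Gen" by (rule gpow)
  moreover have "Am (False,0,False,0,2) [^]\<^bsub>BG\<^esub> nat hh = Am (False,0,False,0,2 * hh)"
  proof -
    have "int (nat hh) = hh" using h0 by simp
    then show ?thesis by (simp only: powA mult_zero_left)
  qed
  moreover have "Am (False,0,False,0,2 * hh) = Am (False,0,False,0,1)"
  proof -
    have "2 * hh - 1 = int m" using hh2 by linarith
    then have H: "(2 * hh - 1) mod int m = 0" by simp
    show ?thesis by (rule Am_cong[OF _ _ H]) simp_all
  qed
  ultimately show ?thesis by simp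
qed

lemma B_in: "Am (False,0,False,1,0) \<in> Gen"
proof -
  have "Am (False,0,False,4,0) \<in> Gen" using gAm[OF s2_in s2_in] by simp
  then have "Am (False,0,False,4,0) [^]\<^bsub>BG\<^esub> (nat hh * nat hh) \<in> Gen" by (rule gpow)
  moreover have "Am (False,0,False,4,0) [^]\<^bsub>BG\<^esub> (nat hh * nat hh) = Am (False,0,False,4 * (hh * hh),0)"
  proof -
    have "int (nat hh * nat hh) = hh * hh" using h0 by simp
    then show ?thesis by (simp only: powB)
  qed
  moreover have "Am (False,0,False,4 * (hh * hh),0) = Am (False,0,False,1,0)"
  proof -
    have "4 * (hh * hh) - 1 = (2 * hh) * (2 * hh) - 1" by simp
    also have "\<dots> = (int m + 1) * (int m + 1) - 1" by (simp only: hh2)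
    also have "\<dots> = int m * (int m + 2)" by (simp add: algebra_simps)
    finally have H: "(4 * (hh * hh) - 1) mod int m = 0" by simp
    show ?thesis by (rule Am_cong[OF _ H]) simp_all
  qed
  ultimately show ?thesis by simp
qed

lemma E_in: "Am (True,0,False,0,0) \<in> Gen"
proof -
  have y: "Am (False,0,False,0,1) [^]\<^bsub>BG\<^esub> (m - 1) \<in> Gen" by (rule gpow[OF Y_in])
  have "Am (False,0,False,0,1) [^]\<^bsub>BG\<^esub> (m - 1) = Am (False,0,False,0,int m - 1)"
    using powA[of 0 1 "m - 1"] mpos by (simp add: of_nat_diff)
  then have "Am (False,0,False,0,int m - 1) \<in> Gen" using y by simp
  from gAm[OF Z_in this] have z2: "Am (True,0,False,-2,int m) \<in> Gen" by simp
  have b2: "Am (False,0,False,2,0) \<in> Gen" using gAm[OF B_in B_in] by simp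
  from gAm[OF z2 b2] have "Am (True,0,False,0,int m) \<in> Gen" by simp
  moreover have "Am (True,0,False,0,int m) = Am (True,0,False,0,0)" by (simp add: Am_eq_iff)
  ultimately show ?thesis by simp
qed

lemma all_in: "Am p \<in> Gen"
proof -
  obtain e u d b g where p: "p = (e,u,d,b,g)" by (cases p) auto
  define u0 where "u0 = u mod int n"
  define g0 where "g0 = g mod int m"
  define b0 where "b0 = (b * sg e) mod int m"
  have pos: "0 \<le> u0" "0 \<le> g0" "0 \<le> b0" using mpos npos by (simp_all add: u0_def g0_def b0_def)
  have r: "Am (False,int (nat u0),False,0,0) \<in> Gen"
    using gpow[OF R_in, of "nat u0"] powA[of 1 0 "nat u0"] by simp
  have y: "Am (False,0,False,0,int (nat g0)) \<in> Gen"
    using gpow[OF Y_in, of "nat g0"] powA[of 0 1 "nat g0"] by simp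
  have b: "Am (False,0,False,int (nat b0),0) \<in> Gen"
    using gpow[OF B_in, of "nat b0"] powB[of 1 "nat b0"] by simp
  have d: "Am (False,0,d,0,0) \<in> Gen"
    using N_in subgroup.one_closed[OF gen_sub] by (cases d) (simp_all add: Am_one)
  have e: "Am (e,0,False,0,0) \<in> Gen"
    using E_in subgroup.one_closed[OF gen_sub] by (cases e) (simp_all add: Am_one)
  have M: "Am (cmp (cmp (False,int (nat u0),False,0,0) (False,0,False,0,int (nat g0)))
             (cmp (False,0,False,int (nat b0),0) (cmp (False,0,d,0,0) (e,0,False,0,0)))) \<in> Gen"
    by (intro gAm r y b d e)
  have i: "int (nat u0) = u0" "int (nat g0) = g0" "int (nat b0) = b0" using pos by simp_all
  have C: "cmp (cmp (False,int (nat u0),False,0,0) (False,0,False,0,int (nat g0)))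
             (cmp (False,0,False,int (nat b0),0) (cmp (False,0,d,0,0) (e,0,False,0,0)))
        = (e, u0, d, b0 * sg e, g0)" unfolding i by simp
  have "Am (e, u0, d, b0 * sg e, g0) \<in> Gen" using M unfolding C .
  moreover have "Am (e, u0, d, b0 * sg e, g0) = Am (e,u,d,b,g)"
  proof -
    have "(b0 * sg e - b) mod int m = 0"
    proof -
      have 1: "b0 * sg e mod int m = (b * sg e * sg e) mod int m" unfolding b0_def by (simp add: mod_mult_left_eq)
      have 2: "b * sg e * sg e = b" by (simp add: mult.assoc)
      have "b0 * sg e mod int m = b mod int m" using 1 2 by simp
      then have "int m dvd b0 * sg e - b" by (simp only: mod_eq_dvd_iff)
      then show ?thesis by (simp only: dvd_eq_mod_eq_0)
    qed
    moreover have "(u0 - u) mod int n = 0" by (simp add: u0_def mod_diff_left_eq)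
    moreover have "(g0 - g) mod int m = 0" by (simp add: g0_def mod_diff_left_eq)
    ultimately show ?thesis by (intro Am_cong)
  qed
  ultimately show ?thesis using p by metis
qed

lemma gen_eq: "Gen = range Am" using gen_le all_in by blast

definition Pset :: "par set" where
  "Pset = UNIV \<times> {0..<int n} \<times> UNIV \<times> {0..<int m} \<times> {0..<int m}"

lemma range_eq: "range Am = Am ` Pset"
proof
  show "range Am \<subseteq> Am ` Pset"
  proof
    fix x assume "x \<in> range Am"
    then obtain e u d b g where x: "x = Am (e,u,d,b,g)" by auto
    have "Am (e,u,d,b,g) = Am (e, u mod int n, d, b mod int m, g mod int m)"
      by (intro Am_cong) (simp_all add: mod_diff_right_eq)
    moreover have "(e, u mod int n, d, b mod int m, g mod int m) \<in> Pset"
      using mpos npos by (simp add: Pset_def)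
    ultimately show "x \<in> Am ` Pset" using x by blast
  qed
qed blast

lemma inj_Am: "inj_on Am Pset"
proof
  fix p q assume "p \<in> Pset" "q \<in> Pset" "Am p = Am q"
  then obtain e u d b g e' u' d' b' g' where p: "p = (e,u,d,b,g)" and q: "q = (e',u',d',b',g')"
    by (cases p; cases q) auto
  have "Am (e,u,d,b,g) = Am (e',u',d',b',g')" using \<open>Am p = Am q\<close> p q by simp
  then have h: "e = e' \<and> d = d' \<and> (u - u') mod int n = 0 \<and> (b - b') mod int m = 0 \<and> (g - g') mod int m = 0"
    by (simp only: Am_eq_iff)
  have r: "0 \<le> u" "u < int n" "0 \<le> u'" "u' < int n" "0 \<le> b" "b < int m" "0 \<le> b'" "b' < int m"
    "0 \<le> g" "g < int m" "0 \<le> g'" "g' < int m"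
    using \<open>p \<in> Pset\<close> \<open>q \<in> Pset\<close> p q by (auto simp: Pset_def)
  have "u = u'" by (rule small_eq[of u "int n" u']) (use r h in simp_all)
  moreover have "b = b'" by (rule small_eq[of b "int m" b']) (use r h in simp_all)
  moreover have "g = g'" by (rule small_eq[of g "int m" g']) (use r h in simp_all)
  ultimately show "p = q" using p q h by simp
qed

lemma card_gen: "card (generate BG {sigma1 n m, sigma2 n m}) = 4 * m^2 * n"
proof -
  have "card (generate BG {sigma1 n m, sigma2 n m}) = card (Am ` Pset)"
    unfolding Gen_def[symmetric] gen_eq range_eq ..
  also have "\<dots> = card Pset" by (rule card_image[OF inj_Am])
  also have "\<dots> = card (UNIV::bool set) * (card {0..<int n} * (card (UNIV::bool set) * (card {0..<int m} * card {0..<int m})))"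
    unfolding Pset_def by (simp only: card_cartesian_product)
  also have "\<dots> = 2 * n * 2 * m * m" by simp
  finally show ?thesis by (simp add: power2_eq_square)
qed

end

theorem lemma5p1:
  fixes m s n :: nat
  assumes "odd m" and "3 \<le> m" and "odd s" and "0 < s" and "n = s * m"
  shows "group.ord (BijGroup (vset n m)) (sigma1 n m) = 2 * n \<and>
          group.ord (BijGroup (vset n m)) (sigma2 n m) = 2 * m \<and>
          group.ord (BijGroup (vset n m))
           (sigma2 n m \<otimes>\<^bsub>BijGroup (vset n m)\<^esub> sigma1 n m) = 2 \<and>
          card (generate (BijGroup (vset n m)) {sigma1 n m, sigma2 n m}) = 4 * m^2 * n"
proof -
  have on: "odd n" using assms by simp
  have mn: "m dvd n" using assms by simp
  have ms: "m \<le> s * m" using assms(4) by simp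
  have n3: "3 \<le> n" using ms assms(2) assms(5) by linarith
  interpret S: setting n m
    by unfold_locales (use assms on mn n3 in auto)
  show ?thesis using S.ord1 S.ord2 S.ord3 S.card_gen by simp
qed

end
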